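(* Consider the non-stationary $N$-armed stochastic bandit problem (described in the context) in an abruptly-changing environment in which the number of breakpoints up to time $T$ satisfies $\Upsilon_T \le C\,T^{\nu}$ for some constant $C>0$ and some known $\nu\in[0,1)$, and assume $\Delta_{\min}>0$. Run the LM-DSEE algorithm with $a=b=1$, exponent $\rho=\frac{1-\nu}{1+\nu}$, exploration constant $\gamma\ge \frac{2}{\Delta_{\min}^2}$ (so that $L(k)=\lceil \gamma\ln(k^\rho l)\rceil$), and $l>0$ chosen so that $\lceil k^\rho l\rceil - N L(k)\ge 0$ for all $k\ge 1$. Then the expected cumulative regret satisfies \[ R^{\text{LM-DSEE}}(T)\in O\big(T^{\frac{1+\nu}{2}}\ln T\big)\quad\text{as } T\to\infty . \]
   Context: Non-stationary stochastic MAB: there are $N$ arms. At each time $t\in\{1,\dots,T\}$ the decision-maker picks an arm $j_t$ and receives a reward $r_t$ drawn (independently of the past, given the chosen arm and time) from a distribution supported on $[0,1]$ with mean $\mu_{j_t}(t)\in[0,1]$; the means $\mu_j(t)$ are unknown and may depend on $t$. Let $\mu_{j_t^*}(t)=\max_{j}\mu_j(t)$. The expected cumulative regret of a policy is $R(T)=\sum_{t=1}^T \mathbb{E}[\mu_{j_t^*}(t)-\mu_{j_t}(t)]$, the expectation being over the randomness of the chosen arms. Abruptly-changing environment: the mean vector $(\mu_1(t),\dots,\mu_N(t))$ is piecewise constant in $t$; a time at which it changes is a breakpoint, and $\Upsilon_T$ denotes the number of breakpoints up to time $T$. Define $\Delta_{\min}=\min\{\mu_{j_t^*}(t)-\mu_j(t)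 : t\in\{1,\dots,T\},\ j\ne j_t^*\}$ (assumed positive and known to the algorithm). LM-DSEE algorithm (parameters $a>0$, $b\in(0,1]$, $\rho>0$, $\gamma>0$, $l>0$): time is divided into consecutive epochs $k=1,2,\dots$ until time $T$ is reached. Epoch $k$ consists of (i) an exploration phase: for each arm $j=1,\dots,N$, arm $j$ is played $L(k)=\lceil \gamma\ln(k^\rho l b)\rceil$ times consecutively, and $\bar r^{\,\text{epch}}_j(k)$ is the sample mean of the $L(k)$ rewards of arm $j$ collected in this exploration phase only; followed by (ii) an exploitation phase: the arm $j^{\text{epch}}_k\in\arg\max_j \bar r^{\,\text{epch}}_j(k)$ is played $\lceil a k^\rho l\rceil - N L(k)$ times. Thus epoch $k$ has length $\lceil a k^\rho l\rceil$. The hidden constant in the $O(\cdot)$ may depend on $N,\nu,C,\Delta_{\min},\gamma,l$ but not on $T$. *)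

theory Defs
  imports "HOL-Probability.Probability" "HOL-Library.Landau_Symbols"
begin

text \<open>LM-DSEE with a = b = 1. Arms are indexed 0..N-1, time steps start at 1.
  Epoch k (k \<ge> 1) has length ceil(k^rho * l); in its exploration phase every arm
  is played L(k) = ceil(gamma * ln(k^rho * l)) times (negative values read as 0).\<close>

definition epoch_len :: "real \<Rightarrow> real \<Rightarrow> nat \<Rightarrow> nat" where
  "epoch_len \<rho> l k = nat \<lceil>real k powr \<rho> * l\<rceil>"

definition expl_len :: "real \<Rightarrow> real \<Rightarrow> real \<Rightarrow> nat \<Rightarrow> nat" where
  "expl_len \<gamma> \<rho> l k = nat \<lceil>\<gamma> * ln (real k powr \<rho> * l)\<rceil>"

definition epoch_start :: "real \<Rightarrow> real \<Rightarrow> nat \<Rightarrow> nat" where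
  "epoch_start \<rho> l k = (\<Sum>i\<in>{1..<k}. epoch_len \<rho> l i)"

definition epoch_of :: "real \<Rightarrow> real \<Rightarrow> nat \<Rightarrow> nat" where
  "epoch_of \<rho> l t = (LEAST k. 1 \<le> k \<and> t \<le> epoch_start \<rho> l (Suc k))"

text \<open>Arm played at time t, given the reward table r (r j s = reward arm j would
  give at time s). sel is the arg-max (tie breaking) rule for the exploitation arm.\<close>
definition lmdsee_arm ::
  "nat \<Rightarrow> ((nat \<Rightarrow> real) \<Rightarrow> nat) \<Rightarrow> real \<Rightarrow> real \<Rightarrow> real \<Rightarrow> (nat \<Rightarrow> nat \<Rightarrow> real) \<Rightarrow> nat \<Rightarrow> nat" where
  "lmdsee_arm N sel \<gamma> \<rho> l r t =
    (let k = epoch_of \<rho> l t; s = epoch_start \<rho> l k; L = expl_len \<gamma> \<rho> l k; p = t - s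
     in if p \<le> N * L then (p - 1) div L
        else sel (\<lambda>j. (\<Sum>i\<in>{1..L}. r j (s + j * L + i)) / real L))"

definition breakpoints :: "nat \<Rightarrow> (nat \<Rightarrow> nat \<Rightarrow> real) \<Rightarrow> nat \<Rightarrow> nat" where
  "breakpoints N \<mu> T = card {t\<in>{2..T}. \<exists>j<N. \<mu> j t \<noteq> \<mu> j (t - 1)}"

definition lmdsee_regret ::
  "'a measure \<Rightarrow> (nat \<Rightarrow> nat \<Rightarrow> 'a \<Rightarrow> real) \<Rightarrow> (nat \<Rightarrow> nat \<Rightarrow> real) \<Rightarrow> nat \<Rightarrow>
   ((nat \<Rightarrow> real) \<Rightarrow> nat) \<Rightarrow> real \<Rightarrow> real \<Rightarrow> real \<Rightarrow> nat \<Rightarrow> real" where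
  "lmdsee_regret M X \<mu> N sel \<gamma> \<rho> l T =
    (\<Sum>t\<in>{1..T}. integral\<^sup>L M (\<lambda>\<omega>.
        Max ((\<lambda>j. \<mu> j t) ` {..<N}) - \<mu> (lmdsee_arm N sel \<gamma> \<rho> l (\<lambda>j s. X j s \<omega>) t) t))"

end

theory Submission
  imports Defs
begin


lemma (in prob_space) indep_sets_reindex:
  assumes ind: "indep_sets F I" and inj: "inj_on h J" and sub: "h ` J \<subseteq> I"
  shows "indep_sets (\<lambda>j. F (h j)) J"
  unfolding indep_sets_def
proof (intro conjI ballI allI impI)
  fix j assume "j \<in> J" then show "F (h j) \<subseteq> events" using ind sub unfolding indep_sets_def by auto
next
  fix J' A assume J': "J' \<subseteq> J" "J' \<noteq> {}" "finite J'" and A: "A \<in> Pi J' (\<lambda>j. F (h j))"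
  define B where "B i = A (the_inv_into J' h i)" for i
  have inj': "inj_on h J'" using inj J' inj_on_subset by blast
  have BA: "B (h j) = A j" if "j \<in> J'" for j
    using the_inv_into_f_f[OF inj' that] by (simp add: B_def)
  have "B \<in> Pi (h ` J') F" using A BA by auto
  moreover have "h ` J' \<subseteq> I" "h ` J' \<noteq> {}" "finite (h ` J')" using J' sub by auto
  ultimately have "prob (\<Inter>i\<in>h ` J'. B i) = (\<Prod>i\<in>h ` J'. prob (B i))"
    using ind unfolding indep_sets_def by blast
  moreover have "(\<Inter>i\<in>h ` J'. B i) = (\<Inter>j\<in>J'. A j)" using BA by auto
  moreover have "(\<Prod>i\<in>h ` J'. prob (B i)) = (\<Prod>j\<in>J'. prob (A j))"
    by (subst prod.reindex[OF inj']) (auto intro!: prod.cong simp: BA)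
  ultimately show "prob (\<Inter>j\<in>J'. A j) = (\<Prod>j\<in>J'. prob (A j))" by simp
qed

lemma (in prob_space) indep_vars_reindex:
  assumes ind: "indep_vars (\<lambda>_. M') Y I" and inj: "inj_on h J" and sub: "h ` J \<subseteq> I"
  shows "indep_vars (\<lambda>_. M') (\<lambda>j. Y (h j)) J"
  using ind sub indep_sets_reindex[OF _ inj sub, where F="\<lambda>i. {Y i -` A \<inter> space M |A. A \<in> sets M'}"]
  unfolding indep_vars_def2 by auto




context
  fixes \<rho> l :: real
  assumes rho0: "0 < \<rho>" and rho1: "\<rho> \<le> 1" and lpos: "0 < l"
begin

lemma len_ge: "real k powr \<rho> * l \<le> real (epoch_len \<rho> l k)"
proof -
  have "0 \<le> real k powr \<rho> * l" using lpos by simp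
  then show ?thesis unfolding epoch_len_def by (simp add: ceiling_correct)
qed

lemma len_less: "real (epoch_len \<rho> l k) < real k powr \<rho> * l + 1"
proof -
  have "0 \<le> real k powr \<rho> * l" using lpos by simp
  then show ?thesis unfolding epoch_len_def by linarith
qed

lemma len_pos: "k \<ge> 1 \<Longrightarrow> epoch_len \<rho> l k \<ge> 1"
proof -
  assume "k \<ge> 1"
  then have "0 < real k powr \<rho> * l" using lpos by simp
  then show ?thesis unfolding epoch_len_def by linarith
qed

lemma len_mono: "k \<le> k' \<Longrightarrow> epoch_len \<rho> l k \<le> epoch_len \<rho> l k'"
proof -
  assume "k \<le> k'"
  then have "real k powr \<rho> \<le> real k' powr \<rho>" using rho0 by (intro powr_mono2) auto
  then have "real k powr \<rho> * l \<le> real k' powr \<rho> * l" using lpos by simp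
  then show ?thesis unfolding epoch_len_def by (intro nat_mono ceiling_mono)
qed

lemma start_Suc: "1 \<le> k \<Longrightarrow> epoch_start \<rho> l (Suc k) = epoch_start \<rho> l k + epoch_len \<rho> l k"
  unfolding epoch_start_def by (simp add: atLeastLessThanSuc)

lemma start_1: "epoch_start \<rho> l 1 = 0"
  unfolding epoch_start_def by simp

lemma start_mono: "k \<le> k' \<Longrightarrow> epoch_start \<rho> l k \<le> epoch_start \<rho> l k'"
  unfolding epoch_start_def by (intro sum_mono2) auto

lemma start_ge: "1 \<le> k \<Longrightarrow> k - 1 \<le> epoch_start \<rho> l k"
proof (induction k rule: dec_induct)
  case base then show ?case by (simp add: start_1)
next
  case (step n) then show ?case using start_Suc[of n] len_pos[of n] by simp
qed

lemma epoch_of_props: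
  assumes "1 \<le> t"
  shows "1 \<le> epoch_of \<rho> l t \<and> epoch_start \<rho> l (epoch_of \<rho> l t) < t \<and> t \<le> epoch_start \<rho> l (Suc (epoch_of \<rho> l t))"
proof -
  let ?P = "\<lambda>k. 1 \<le> k \<and> t \<le> epoch_start \<rho> l (Suc k)"
  have ex: "?P t" using start_ge[of "Suc t"] assms by simp
  define k where "k = epoch_of \<rho> l t"
  have Pk: "?P k" unfolding k_def epoch_of_def by (rule LeastI[of ?P, OF ex])
  have "epoch_start \<rho> l k < t"
  proof (cases "k = 1")
    case True then show ?thesis using assms start_1 by simp
  next
    case False
    then have "k - 1 < k" "1 \<le> k - 1" using Pk by auto
    then have "\<not> ?P (k - 1)" unfolding k_def epoch_of_def using not_less_Least by blast
    then show ?thesis using \<open>1 \<le> k - 1\<close> by (simp add: Suc_diff_1 Pk)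
  qed
  with Pk show ?thesis unfolding k_def by auto
qed

lemma epoch_ofI:
  assumes "1 \<le> k" "epoch_start \<rho> l k < t" "t \<le> epoch_start \<rho> l (Suc k)"
  shows "epoch_of \<rho> l t = k"
  unfolding epoch_of_def
proof (rule Least_equality)
  show "1 \<le> k \<and> t \<le> epoch_start \<rho> l (Suc k)" using assms by auto
next
  fix k' assume "1 \<le> k' \<and> t \<le> epoch_start \<rho> l (Suc k')"
  then show "k \<le> k'" using start_mono[of "Suc k'" k] assms by (cases "k \<le> k'") auto
qed

end



locale lm = prob_space M for M :: "'a measure" +
  fixes X :: "nat \<Rightarrow> nat \<Rightarrow> 'a \<Rightarrow> real"
    and \<mu> :: "nat \<Rightarrow> nat \<Rightarrow> real" and N :: nat and sel :: "(nat \<Rightarrow> real) \<Rightarrow> nat"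
    and C \<nu> \<Delta> \<gamma> l \<rho> :: real
  assumes N1: "N \<ge> 1"
    and indep: "indep_vars (\<lambda>_. borel) (\<lambda>(j, t). X j t) ({..<N} \<times> UNIV)"
    and support: "\<And>j t. j < N \<Longrightarrow> AE \<omega> in M. 0 \<le> X j t \<omega> \<and> X j t \<omega> \<le> 1"
    and mean: "\<And>j t. j < N \<Longrightarrow> integral\<^sup>L M (X j t) = \<mu> j t"
    and C0: "C > 0" and nu0: "0 \<le> \<nu>" and nu1: "\<nu> < 1"
    and breaks: "\<And>T. real (breakpoints N \<mu> T) \<le> C * real T powr \<nu>"
    and D0: "\<Delta> > 0"
    and gap: "\<And>t. \<exists>i<N. \<forall>j<N. j \<noteq> i \<longrightarrow> \<mu> j t + \<Delta> \<le> \<mu> i t"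
    and gam: "\<gamma> \<ge> 2 / \<Delta>\<^sup>2"
    and lpos: "l > 0"
    and rho_def: "\<rho> = (1 - \<nu>) / (1 + \<nu>)"
    and len_ok: "\<And>k::nat. k \<ge> 1 \<Longrightarrow>
       \<lceil>real k powr \<rho> * l\<rceil> - int N * \<lceil>\<gamma> * ln (real k powr \<rho> * l)\<rceil> \<ge> 0"
    and sel: "\<And>v. sel v < N \<and> (\<forall>j<N. v j \<le> v (sel v))"
begin

lemma rho0: "0 < \<rho>" and rho1: "\<rho> \<le> 1"
  using nu0 nu1 by (auto simp: rho_def field_simps)

abbreviation "S \<equiv> epoch_start \<rho> l"
abbreviation "len \<equiv> epoch_len \<rho> l"
abbreviation "L \<equiv> expl_len \<gamma> \<rho> l"
abbreviation "arm \<omega> t \<equiv> lmdsee_arm N sel \<gamma> \<rho> l (\<lambda>j s. X j s \<omega>) t"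

definition f where "f t \<omega> = Max ((\<lambda>j. \<mu> j t) ` {..<N}) - \<mu> (arm \<omega> t) t"

definition avg where "avg k j \<omega> = (\<Sum>i\<in>{1..L k}. X j (S k + j * L k + i) \<omega>) / real (L k)"

definition clean where "clean k \<longleftrightarrow> (\<forall>t\<in>{S k + 1..S (Suc k)}. \<forall>j<N. \<mu> j t = \<mu> j (S k + 1))"

definition bad where "bad k = {\<omega>\<in>space M. \<exists>j<N. \<Delta> / 2 \<le> \<bar>avg k j \<omega> - \<mu> j (S k + 1)\<bar>}"

lemma X_rv: "j < N \<Longrightarrow> random_variable borel (X j t)"
  using indep unfolding indep_vars_def2 by auto

lemma mu_bounds: "j < N \<Longrightarrow> 0 \<le> \<mu> j t \<and> \<mu> j t \<le> 1"
proof -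
  assume j: "j < N"
  have int: "integrable M (X j t)"
  proof (rule integrable_const_bound[where B=1])
    show "AE x in M. norm (X j t x) \<le> 1" using support[OF j, of t] by eventually_elim auto
  qed (use X_rv[OF j] in auto)
  have "0 \<le> integral\<^sup>L M (X j t)"
    by (rule integral_nonneg_AE) (use support[OF j] in auto)
  moreover have "integral\<^sup>L M (X j t) \<le> integral\<^sup>L M (\<lambda>_. 1)"
    by (rule integral_mono_AE) (use int support[OF j] in auto)
  ultimately show ?thesis using mean[OF j] by (simp add: prob_space)
qed

lemma arm_lt: "arm \<omega> t < N"
proof -
  define k where "k = epoch_of \<rho> l t"
  define p where "p = t - S k"
  show ?thesis
  proof (cases "p \<le> N * L k")
    case True
    then have "arm \<omega> t = (p - 1) div L k"
      unfolding lmdsee_arm_def Let_def k_def p_def by simp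
    also have "\<dots> < N"
    proof (cases "L k = 0")
      case True then show ?thesis using N1 by simp
    next
      case False
      have "p - 1 < N * L k"
        using True False N1 by (cases p) auto
      then show ?thesis using False by (simp add: div_less_iff_less_mult mult.commute)
    qed
    finally show ?thesis .
  next
    case False
    then have "arm \<omega> t = sel (\<lambda>j. avg k j \<omega>)"
      unfolding lmdsee_arm_def Let_def k_def p_def avg_def by simp
    then show ?thesis using sel by simp
  qed
qed

lemma f_bounds: "0 \<le> f t \<omega> \<and> f t \<omega> \<le> 1"
proof -
  have fin: "finite ((\<lambda>j. \<mu> j t) ` {..<N})" and ne: "(\<lambda>j. \<mu> j t) ` {..<N} \<noteq> {}" using N1 by (auto simp: lessThan_empty_iff)
  have "\<mu> (arm \<omega> t) t \<le> Max ((\<lambda>j. \<mu> j t) ` {..<N})"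
    using arm_lt[of \<omega> t] fin by (intro Max_ge) auto
  moreover have "Max ((\<lambda>j. \<mu> j t) ` {..<N}) \<le> 1"
    using fin ne mu_bounds by (subst Max_le_iff) auto
  moreover have "0 \<le> \<mu> (arm \<omega> t) t" using mu_bounds arm_lt by blast
  ultimately show ?thesis unfolding f_def by simp
qed

lemma integral_le_prob:
  assumes "\<And>\<omega>. 0 \<le> g \<omega> \<and> g \<omega> \<le> 1" "\<And>\<omega>. \<omega> \<in> space M \<Longrightarrow> \<omega> \<notin> B \<Longrightarrow> g \<omega> = 0" "B \<in> events"
  shows "integral\<^sup>L M g \<le> prob B"
proof (cases "integrable M g")
  case True
  have "integral\<^sup>L M g \<le> integral\<^sup>L M (indicator B :: 'a \<Rightarrow> real)"
    by (rule integral_mono) (use True assms in \<open>auto simp: indicator_def emeasure_eq_measure\<close>)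
  then show ?thesis using assms(3) by simp
next
  case False then show ?thesis by (simp add: not_integrable_integral_eq)
qed

lemma Ef_le1: "integral\<^sup>L M (f t) \<le> 1"
  using integral_le_prob[of "f t" "space M"] f_bounds by (simp add: prob_space)

lemma Ef_nonneg: "0 \<le> integral\<^sup>L M (f t)"
  using f_bounds by (intro integral_nonneg_AE) auto

end



context lm begin

lemmas lenge = len_ge[OF rho0 rho1 lpos]
lemmas lenless = len_less[OF rho0 rho1 lpos]
lemmas lenpos = len_pos[OF rho0 rho1 lpos]
lemmas lenmono = len_mono[OF rho0 rho1 lpos]
lemmas startSuc = start_Suc[OF rho0 rho1 lpos]
lemmas start1 = start_1[OF rho0 rho1 lpos]
lemmas startmono = start_mono[OF rho0 rho1 lpos]
lemmas startge = start_ge[OF rho0 rho1 lpos]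
lemmas epprops = epoch_of_props[OF rho0 rho1 lpos]
lemmas epI = epoch_ofI[OF rho0 rho1 lpos]

lemma NL_le: "1 \<le> k \<Longrightarrow> N * L k \<le> len k"
proof -
  assume k: "1 \<le> k"
  define x where "x = real k powr \<rho> * l"
  define y where "y = \<gamma> * ln x"
  have x0: "0 < x" using k lpos by (simp add: x_def)
  have ok: "\<lceil>x\<rceil> - int N * \<lceil>y\<rceil> \<ge> 0" using len_ok[OF k] by (simp add: x_def y_def)
  have "int (N * L k) \<le> int (len k)"
  proof (cases "\<lceil>y\<rceil> \<le> 0")
    case True
    then have "L k = 0" by (simp add: expl_len_def y_def x_def)
    then show ?thesis by simp
  next
    case False
    then have "int (L k) = \<lceil>y\<rceil>" by (simp add: expl_len_def y_def x_def)
    moreover have "int (len k) = \<lceil>x\<rceil>" using x0 by (simp add: epoch_len_def x_def)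
    ultimately show ?thesis using ok by simp
  qed
  then show ?thesis by linarith
qed

lemma avg_meas: "j < N \<Longrightarrow> avg k j \<in> borel_measurable M"
  unfolding avg_def by (intro borel_measurable_divide borel_measurable_sum borel_measurable_const) (use X_rv in auto)

lemma badj_meas: "j < N \<Longrightarrow> {\<omega>\<in>space M. \<Delta> / 2 \<le> \<bar>avg k j \<omega> - \<mu> j (S k + 1)\<bar>} \<in> events"
  using avg_meas[of j k] by measurable

lemma bad_eq: "bad k = (\<Union>j\<in>{..<N}. {\<omega>\<in>space M. \<Delta> / 2 \<le> \<bar>avg k j \<omega> - \<mu> j (S k + 1)\<bar>})"
  unfolding bad_def by auto

lemma bad_meas: "bad k \<in> events"
  unfolding bad_eq using badj_meas by auto

lemma f_zero:
  assumes t: "1 \<le> t" and kdef: "k = epoch_of \<rho> l t" and p: "N * L k < t - S k"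
    and cl: "clean k" and nb: "\<omega> \<notin> bad k" and om: "\<omega> \<in> space M"
  shows "f t \<omega> = 0"
proof -
  have arm: "arm \<omega> t = sel (\<lambda>j. avg k j \<omega>)"
    using p unfolding lmdsee_arm_def Let_def kdef avg_def by simp
  have tk: "t \<in> {S k + 1..S (Suc k)}" using epprops[OF t] kdef by auto
  have mu: "\<mu> j t = \<mu> j (S k + 1)" if "j < N" for j using cl tk that unfolding clean_def by blast
  have close: "\<bar>avg k j \<omega> - \<mu> j t\<bar> < \<Delta> / 2" if "j < N" for j
    using nb om that mu[OF that] unfolding bad_def by force
  obtain i where i: "i < N" "\<And>j. j < N \<Longrightarrow> j \<noteq> i \<Longrightarrow> \<mu> j t + \<Delta> \<le> \<mu> i t" using gap[of t] by blast
  define v where "v = (\<lambda>j. avg k j \<omega>)"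
  have vj: "v j = avg k j \<omega>" for j by (simp add: v_def)
  have "sel v = i"
  proof (rule ccontr)
    assume ne: "sel v \<noteq> i"
    have s: "sel v < N" "v i \<le> v (sel v)" using sel[of v] i(1) by auto
    have "v (sel v) < \<mu> (sel v) t + \<Delta> / 2" using close[OF s(1)] vj[of "sel v"] abs_less_iff[of "avg k (sel v) \<omega> - \<mu> (sel v) t"] by linarith
    also have "\<dots> \<le> \<mu> i t - \<Delta> / 2" using i(2)[OF s(1) ne] by simp
    also have "\<dots> < v i" using close[OF i(1)] vj[of i] abs_less_iff[of "avg k i \<omega> - \<mu> i t"] by linarith
    finally show False using s(2) by simp
  qed
  then have a: "arm \<omega> t = i" using arm by (simp add: v_def)
  have "Max ((\<lambda>j. \<mu> j t) ` {..<N}) = \<mu> i t"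
    by (rule Max_eqI) (use i D0 in \<open>auto, force\<close>)
  then show ?thesis unfolding f_def a by simp
qed

lemma hoeff:
  assumes k: "1 \<le> k" and cl: "clean k" and j: "j < N" and L1: "1 \<le> L k"
  shows "prob {\<omega>\<in>space M. \<Delta> / 2 \<le> \<bar>avg k j \<omega> - \<mu> j (S k + 1)\<bar>} \<le> 2 * exp (- real (L k) * \<Delta>\<^sup>2 / 2)"
proof -
  define Y where "Y = (\<lambda>i. X j (S k + j * L k + i))"
  define h where "h i = (j, S k + j * L k + i)" for i
  have inj: "inj_on h {1..L k}" unfolding h_def inj_on_def by auto
  have "indep_vars (\<lambda>_. borel) (\<lambda>i. (\<lambda>(j, t). X j t) (h i)) {1..L k}"
    by (rule indep_vars_reindex[OF indep inj]) (use j in \<open>auto simp: h_def\<close>)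
  then have indY: "indep_vars (\<lambda>_. borel) Y {1..L k}" unfolding Y_def h_def by simp
  have EY: "expectation (Y i) = \<mu> j (S k + 1)" if "i \<in> {1..L k}" for i
  proof -
    have "j * L k + i \<le> N * L k"
    proof -
      have "j * L k + i \<le> j * L k + L k" using that by simp
      also have "\<dots> = Suc j * L k" by simp
      also have "\<dots> \<le> N * L k" using j by (intro mult_right_mono) auto
      finally show ?thesis .
    qed
    then have "S k + j * L k + i \<in> {S k + 1..S (Suc k)}"
      using that NL_le[OF k] startSuc[OF k] by auto
    then have "\<mu> j (S k + j * L k + i) = \<mu> j (S k + 1)" using cl j unfolding clean_def by blast
    moreover have "expectation (Y i) = \<mu> j (S k + j * L k + i)" using mean[OF j] by (simp add: Y_def)
    ultimately show ?thesis by simp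
  qed
  define m where "m = (\<Sum>i\<in>{1..L k}. expectation (Y i))"
  have m: "m = real (L k) * \<mu> j (S k + 1)" unfolding m_def using EY by simp
  interpret H: Hoeffding_ineq M "{1..L k}" Y "\<lambda>_. 0" "\<lambda>_. 1" m
  proof unfold_locales
    fix i assume "i \<in> {1..L k}"
    show "AE x in M. Y i x \<in> {0..1}" using support[OF j, of "S k + j * L k + i"] unfolding Y_def by (auto elim!: eventually_mono)
  qed (use indY in \<open>auto simp: m_def\<close>)
  have sq: "(\<Sum>i\<in>{1..L k}. ((1::real) - 0)\<^sup>2) = real (L k)" by simp
  have Lpos: "0 < real (L k)" using L1 by simp
  have "{\<omega>\<in>space M. \<Delta> / 2 \<le> \<bar>avg k j \<omega> - \<mu> j (S k + 1)\<bar>} =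
        {\<omega>\<in>space M. real (L k) * (\<Delta> / 2) \<le> \<bar>(\<Sum>i\<in>{1..L k}. Y i \<omega>) - m\<bar>}"
  proof -
    have "\<Delta> / 2 \<le> \<bar>avg k j \<omega> - \<mu> j (S k + 1)\<bar> \<longleftrightarrow> real (L k) * (\<Delta> / 2) \<le> \<bar>(\<Sum>i\<in>{1..L k}. Y i \<omega>) - m\<bar>" for \<omega>
    proof -
      have "avg k j \<omega> - \<mu> j (S k + 1) = ((\<Sum>i\<in>{1..L k}. Y i \<omega>) - m) / real (L k)"
        using Lpos unfolding avg_def Y_def m by (simp add: diff_divide_distrib)
      then have "\<bar>(\<Sum>i\<in>{1..L k}. Y i \<omega>) - m\<bar> = real (L k) * \<bar>avg k j \<omega> - \<mu> j (S k + 1)\<bar>"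
        using Lpos by (simp add: abs_mult)
      then show ?thesis using Lpos by (simp add: mult_le_cancel_left_pos)
    qed
    then show ?thesis by auto
  qed
  also have "prob \<dots> \<le> 2 * exp (- 2 * (real (L k) * (\<Delta> / 2))\<^sup>2 / (\<Sum>i\<in>{1..L k}. ((1::real) - 0)\<^sup>2))"
    by (rule H.Hoeffding_ineq_abs_ge) (use D0 Lpos in \<open>auto\<close>)
  also have "- 2 * (real (L k) * (\<Delta> / 2))\<^sup>2 / (\<Sum>i\<in>{1..L k}. ((1::real) - 0)\<^sup>2) = - real (L k) * \<Delta>\<^sup>2 / 2"
    using Lpos unfolding sq by (simp add: field_simps power2_eq_square)
  finally show ?thesis .
qed

end



context lm begin

lemma gam0: "\<gamma> > 0"
proof -
  have "2 / \<Delta>\<^sup>2 > 0" using D0 by simp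
  then show ?thesis using gam by linarith
qed

lemma lenP:
  assumes k: "1 \<le> k" and cl: "clean k"
  shows "real (len k) * prob (bad k) \<le> 4 * N"
proof -
  define x where "x = real k powr \<rho> * l"
  have x0: "0 < x" using k lpos by (simp add: x_def)
  have lx: "real (len k) < x + 1" using lenless[of k] by (simp add: x_def)
  show ?thesis
  proof (cases "x \<le> 1")
    case True
    then have "len k \<le> 1" using lx by linarith
    moreover have "prob (bad k) \<le> 1" by simp
    ultimately have "real (len k) * prob (bad k) \<le> 1 * 1"
      by (intro mult_mono) auto
    then show ?thesis using N1 by simp
  next
    case False
    then have lnx: "0 < ln x" by simp
    define y where "y = \<gamma> * ln x"
    have y0: "0 < y" using gam0 lnx by (simp add: y_def)
    have Ly: "y \<le> real (L k)" unfolding expl_len_def y_def x_def[symmetric]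
      using y0 y_def by linarith
    have L1: "1 \<le> L k" using Ly y0 by linarith
    have ex: "ln x \<le> real (L k) * \<Delta>\<^sup>2 / 2"
    proof -
      have "ln x = (2 / \<Delta>\<^sup>2) * ln x * \<Delta>\<^sup>2 / 2" using D0 by (simp add: field_simps)
      also have "\<dots> \<le> \<gamma> * ln x * \<Delta>\<^sup>2 / 2"
        using gam lnx D0 by (intro divide_right_mono mult_right_mono) auto
      also have "\<dots> \<le> real (L k) * \<Delta>\<^sup>2 / 2"
        using Ly by (intro divide_right_mono mult_right_mono) (auto simp: y_def)
      finally show ?thesis .
    qed
    have pj: "prob {\<omega>\<in>space M. \<Delta> / 2 \<le> \<bar>avg k j \<omega> - \<mu> j (S k + 1)\<bar>} \<le> 2 / x" if j: "j < N" for j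
    proof -
      have "prob {\<omega>\<in>space M. \<Delta> / 2 \<le> \<bar>avg k j \<omega> - \<mu> j (S k + 1)\<bar>} \<le> 2 * exp (- real (L k) * \<Delta>\<^sup>2 / 2)"
        by (rule hoeff[OF k cl j L1])
      also have "\<dots> \<le> 2 * exp (- ln x)" using ex by simp
      also have "\<dots> = 2 / x" using x0 by (simp add: exp_minus divide_inverse)
      finally show ?thesis .
    qed
    have "prob (bad k) \<le> (\<Sum>j\<in>{..<N}. prob {\<omega>\<in>space M. \<Delta> / 2 \<le> \<bar>avg k j \<omega> - \<mu> j (S k + 1)\<bar>})"
      unfolding bad_eq by (rule measure_UNION_le) (use badj_meas in auto)
    also have "\<dots> \<le> (\<Sum>j\<in>{..<N}. 2 / x)" by (intro sum_mono pj) auto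
    also have "\<dots> = real N * (2 / x)" by simp
    finally have pb: "prob (bad k) \<le> real N * (2 / x)" .
    have "real (len k) * prob (bad k) \<le> (2 * x) * (real N * (2 / x))"
      using lx False pb by (intro mult_mono) auto
    also have "\<dots> = 4 * N" using x0 by (simp add: field_simps)
    finally show ?thesis .
  qed
qed

lemma Ef_bound:
  assumes t: "1 \<le> t" and kdef: "k = epoch_of \<rho> l t"
  shows "integral\<^sup>L M (f t) \<le> (if t - S k \<le> N * L k then 1 else 0) + (if clean k then prob (bad k) else 1)"
proof (cases "t - S k \<le> N * L k")
  case True
  have p0: "0 \<le> prob (bad k)" by simp
  have "integral\<^sup>L M (f t) \<le> 1 + prob (bad k)" using p0 Ef_le1[of t] by linarith
  moreover have "integral\<^sup>L M (f t) \<le> 1 + 1" using Ef_le1[of t] by linarith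
  ultimately show ?thesis using True by simp
next
  case False
  show ?thesis
  proof (cases "clean k")
    case True
    have "integral\<^sup>L M (f t) \<le> prob (bad k)"
      by (rule integral_le_prob) (use f_bounds f_zero[OF t kdef _ True] False bad_meas in auto)
    then show ?thesis using False True by simp
  next
    case c: False
    then show ?thesis using Ef_le1[of t] False by simp
  qed
qed

lemma card_block: "card {S k + 1..S (Suc k)} = S (Suc k) - S k"
  by simp

lemma block_sum:
  assumes k: "1 \<le> k"
  shows "(\<Sum>t\<in>{S k + 1..S (Suc k)}. integral\<^sup>L M (f t)) \<le> real (N * L k) + 4 * N + (if clean k then 0 else real (len k))"
proof -
  define B where "B = {S k + 1..S (Suc k)}"
  define c where "c = (if clean k then prob (bad k) else 1)"
  have SS: "S (Suc k) = S k + len k" by (rule startSuc[OF k])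
  have cardB: "card B = len k" unfolding B_def SS by simp
  have ep: "epoch_of \<rho> l t = k" if "t \<in> B" for t
    by (rule epI) (use that k in \<open>auto simp: B_def\<close>)
  have "(\<Sum>t\<in>B. integral\<^sup>L M (f t)) \<le> (\<Sum>t\<in>B. (if t - S k \<le> N * L k then 1 else 0) + c)"
  proof (rule sum_mono)
    fix t assume tB: "t \<in> B"
    then have "1 \<le> t" by (auto simp: B_def)
    then show "integral\<^sup>L M (f t) \<le> (if t - S k \<le> N * L k then 1 else 0) + c"
      using Ef_bound[of t k] ep[OF tB] unfolding c_def by simp
  qed
  also have "\<dots> = (\<Sum>t\<in>B. (if t - S k \<le> N * L k then 1 else 0)) + real (len k) * c"
    by (simp add: sum.distrib cardB)
  also have "(\<Sum>t\<in>B. (if t - S k \<le> N * L k then 1 else 0) :: real) = real (card {t\<in>B. t - S k \<le> N * L k})"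
    by (simp add: sum.inter_filter[symmetric] B_def)
  also have "card {t\<in>B. t - S k \<le> N * L k} \<le> card {S k + 1..S k + N * L k}"
    by (rule card_mono) (auto simp: B_def)
  also have "card {S k + 1..S k + N * L k} = N * L k" by simp
  also have "real (len k) * c \<le> 4 * N + (if clean k then 0 else real (len k))"
    using lenP[OF k] N1 unfolding c_def by auto
  finally show ?thesis unfolding B_def by simp
qed

end



context lm begin

lemma epoch_mono:
  assumes "1 \<le> t" "t \<le> T"
  shows "epoch_of \<rho> l t \<le> epoch_of \<rho> l T"
proof -
  define K where "K = epoch_of \<rho> l T"
  have P: "1 \<le> K \<and> t \<le> S (Suc K)" using epprops[of T] assms unfolding K_def by auto
  have "(LEAST k. 1 \<le> k \<and> t \<le> S (Suc k)) \<le> K" by (rule Least_le) (rule P)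
  then show ?thesis unfolding K_def epoch_of_def .
qed

lemma noncl:
  assumes k: "1 \<le> k" and nc: "\<not> clean k"
  shows "\<exists>t\<in>{S k + 2..S (Suc k)}. \<exists>j<N. \<mu> j t \<noteq> \<mu> j (t - 1)"
proof (rule ccontr)
  assume "\<not> ?thesis"
  then have h: "\<And>t j. t \<in> {S k + 2..S (Suc k)} \<Longrightarrow> j < N \<Longrightarrow> \<mu> j t = \<mu> j (t - 1)" by blast
  have "\<mu> j t = \<mu> j (S k + 1)" if "t \<in> {S k + 1..S (Suc k)}" "j < N" for t j
  proof -
    have "S k + 1 \<le> t" using that by auto
    then have "t \<le> S (Suc k) \<longrightarrow> \<mu> j t = \<mu> j (S k + 1)"
    proof (induction t rule: dec_induct)
      case base then show ?case by simp
    next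
      case (step n)
      show ?case
      proof
        assume "Suc n \<le> S (Suc k)"
        then have "\<mu> j (Suc n) = \<mu> j (Suc n - 1)" using h[of "Suc n" j] step.hyps \<open>j < N\<close> by auto
        then show "\<mu> j (Suc n) = \<mu> j (S k + 1)" using step.IH \<open>Suc n \<le> S (Suc k)\<close> by simp
      qed
    qed
    then show ?thesis using that by auto
  qed
  then show False using nc unfolding clean_def by blast
qed

lemma count_noncl:
  assumes T: "1 \<le> T" and Kdef: "K = epoch_of \<rho> l T"
  shows "card {k\<in>{1..K}. \<not> clean k} \<le> breakpoints N \<mu> (S (Suc K))"
proof -
  define A where "A = {k\<in>{1..K}. \<not> clean k}"
  define Bs where "Bs = {t\<in>{2..S (Suc K)}. \<exists>j<N. \<mu> j t \<noteq> \<mu> j (t - 1)}"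
  define w where "w k = (SOME t. t \<in> {S k + 2..S (Suc k)} \<and> (\<exists>j<N. \<mu> j t \<noteq> \<mu> j (t - 1)))" for k
  have w: "w k \<in> {S k + 2..S (Suc k)} \<and> (\<exists>j<N. \<mu> j (w k) \<noteq> \<mu> j (w k - 1))" if "k \<in> A" for k
  proof -
    have "1 \<le> k" "\<not> clean k" using that by (auto simp: A_def)
    from noncl[OF this] show ?thesis unfolding w_def by (rule someI2_bex) blast
  qed
  have "inj_on w A"
  proof (rule inj_onI)
    fix k k' assume kA: "k \<in> A" and kA': "k' \<in> A" and eq: "w k = w k'"
    have ep: "epoch_of \<rho> l (w q) = q" if qA: "q \<in> A" for q
    proof -
      have wq: "S q + 2 \<le> w q" "w q \<le> S (Suc q)" using w[OF qA] by auto
      have q1: "1 \<le> q" using qA by (simp add: A_def)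
      have "S q < w q" using wq(1) by linarith
      from epI[OF q1 this wq(2)] show ?thesis .
    qed
    show "k = k'" using ep[OF kA] ep[OF kA'] eq by metis
  qed
  moreover have "w ` A \<subseteq> Bs"
  proof
    fix t assume "t \<in> w ` A"
    then obtain k where kA: "k \<in> A" and t: "t = w k" by auto
    have "S (Suc k) \<le> S (Suc K)" using kA by (intro startmono) (auto simp: A_def)
    then show "t \<in> Bs" using w[OF kA] unfolding t Bs_def by auto
  qed
  moreover have "finite Bs" unfolding Bs_def by simp
  ultimately have "card A \<le> card Bs" by (rule card_inj_on_le)
  then show ?thesis unfolding A_def Bs_def breakpoints_def .
qed

lemma regret_eq: "lmdsee_regret M X \<mu> N sel \<gamma> \<rho> l T = (\<Sum>t\<in>{1..T}. integral\<^sup>L M (f t))"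
  unfolding lmdsee_regret_def f_def by simp

lemma regret_le:
  assumes T: "1 \<le> T" and Kdef: "K = epoch_of \<rho> l T"
  shows "lmdsee_regret M X \<mu> N sel \<gamma> \<rho> l T \<le>
           (\<Sum>k\<in>{1..K}. real (N * L k) + 4 * N) + real (breakpoints N \<mu> (S (Suc K))) * real (len K)"
proof -
  define Bl where "Bl k = {S k + 1..S (Suc k)}" for k
  have K1: "1 \<le> K" using epprops[OF T] Kdef by simp
  have sub: "{1..T} \<subseteq> (\<Union>k\<in>{1..K}. Bl k)"
  proof
    fix t assume t: "t \<in> {1..T}"
    define k where "k = epoch_of \<rho> l t"
    have "k \<in> {1..K}" using epprops[of t] epoch_mono[of t T] t Kdef by (auto simp: k_def)
    moreover have "t \<in> Bl k" using epprops[of t] t by (auto simp: k_def Bl_def)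
    ultimately show "t \<in> (\<Union>k\<in>{1..K}. Bl k)" by blast
  qed
  have disj: "Bl k \<inter> Bl k' = {}" if "k \<in> {1..K}" "k' \<in> {1..K}" "k \<noteq> k'" for k k'
  proof -
    { fix t assume "t \<in> Bl k" "t \<in> Bl k'"
      then have "epoch_of \<rho> l t = k" "epoch_of \<rho> l t = k'"
        using that epI[of k t] epI[of k' t] unfolding Bl_def by auto
      then have False using that by simp }
    then show ?thesis by blast
  qed
  have "lmdsee_regret M X \<mu> N sel \<gamma> \<rho> l T = (\<Sum>t\<in>{1..T}. integral\<^sup>L M (f t))" by (rule regret_eq)
  also have "\<dots> \<le> (\<Sum>t\<in>(\<Union>k\<in>{1..K}. Bl k). integral\<^sup>L M (f t))"
    by (rule sum_mono2[OF _ sub]) (auto simp: Bl_def intro: Ef_nonneg)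
  also have "\<dots> = (\<Sum>k\<in>{1..K}. \<Sum>t\<in>Bl k. integral\<^sup>L M (f t))"
    proof (rule sum.UNION_disjoint)
    show "finite {1..K}" by simp
    show "\<forall>i\<in>{1..K}. finite (Bl i)" by (simp add: Bl_def)
    show "\<forall>i\<in>{1..K}. \<forall>j\<in>{1..K}. i \<noteq> j \<longrightarrow> Bl i \<inter> Bl j = {}" using disj by blast
  qed
  also have "\<dots> \<le> (\<Sum>k\<in>{1..K}. real (N * L k) + 4 * N + (if clean k then 0 else real (len k)))"
  proof (rule sum_mono)
    fix k assume "k \<in> {1..K}"
    then show "(\<Sum>t\<in>Bl k. integral\<^sup>L M (f t)) \<le> real (N * L k) + 4 * N + (if clean k then 0 else real (len k))"
      using block_sum[of k] unfolding Bl_def by simp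
  qed
  also have "\<dots> = (\<Sum>k\<in>{1..K}. real (N * L k) + 4 * N) + (\<Sum>k\<in>{1..K}. (if clean k then 0 else real (len k)))"
    by (simp add: sum.distrib)
  finally have main: "lmdsee_regret M X \<mu> N sel \<gamma> \<rho> l T \<le> (\<Sum>k\<in>{1..K}. real (N * L k) + 4 * N) + (\<Sum>k\<in>{1..K}. (if clean k then 0 else real (len k)))" .
  have "(\<Sum>k\<in>{1..K}. (if clean k then 0 else real (len k))) \<le> (\<Sum>k\<in>{1..K}. (if clean k then 0 else real (len K)))"
  proof (rule sum_mono)
    fix k assume "k \<in> {1..K}"
    then have "len k \<le> len K" by (intro lenmono) simp
    then show "(if clean k then 0 else real (len k)) \<le> (if clean k then 0 else real (len K))" by simp
  qed
  also have "\<dots> = real (card {k\<in>{1..K}. \<not> clean k}) * real (len K)"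
  proof -
    have "(\<Sum>k\<in>{1..K}. (if clean k then 0 else real (len K))) = (\<Sum>k\<in>{k\<in>{1..K}. \<not> clean k}. real (len K))"
      proof -
      have "(\<Sum>k\<in>{k\<in>{1..K}. \<not> clean k}. real (len K)) = (\<Sum>k\<in>{1..K}. if \<not> clean k then real (len K) else 0)"
        by (rule sum.inter_filter) simp
      also have "\<dots> = (\<Sum>k\<in>{1..K}. (if clean k then 0 else real (len K)))"
        by (rule sum.cong) auto
      finally show ?thesis by simp
    qed
    then show ?thesis by simp
  qed
  also have "\<dots> \<le> real (breakpoints N \<mu> (S (Suc K))) * real (len K)"
    using count_noncl[OF T Kdef] by (intro mult_right_mono) auto
  finally have "(\<Sum>k\<in>{1..K}. (if clean k then 0 else real (len k))) \<le> real (breakpoints N \<mu> (S (Suc K))) * real (len K)" .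
  then have "(\<Sum>k\<in>{1..K}. real (N * L k) + 4 * N) + (\<Sum>k\<in>{1..K}. (if clean k then 0 else real (len k))) \<le>
     (\<Sum>k\<in>{1..K}. real (N * L k) + 4 * N) + real (breakpoints N \<mu> (S (Suc K))) * real (len K)"
    by (rule add_left_mono)
  with main show ?thesis by (rule order_trans)
qed

end



lemma sumpow:
  fixes \<rho> :: real
  assumes r0: "0 < \<rho>" and r1: "\<rho> \<le> 1"
  shows "real m powr (1 + \<rho>) / 2 \<le> (\<Sum>i\<in>{1..m}. real i powr \<rho>)"
proof (cases "m = 0")
  case True then show ?thesis by simp
next
  case False
  then have m0: "0 < real m" by simp
  have "(\<Sum>i\<in>{1..m}. real i * real m powr (\<rho> - 1)) \<le> (\<Sum>i\<in>{1..m}. real i powr \<rho>)"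
  proof (rule sum_mono)
    fix i assume i: "i \<in> {1..m}"
    then have i0: "0 < real i" by simp
    have "real m powr (\<rho> - 1) \<le> real i powr (\<rho> - 1)"
      using r1 i0 i by (intro powr_mono2') auto
    then have "real i * real m powr (\<rho> - 1) \<le> real i * real i powr (\<rho> - 1)"
      using i0 by (intro mult_left_mono) auto
    also have "\<dots> = real i powr \<rho>"
      using i0 by (simp add: powr_mult_base)
    finally show "real i * real m powr (\<rho> - 1) \<le> real i powr \<rho>" .
  qed
  moreover have "(\<Sum>i\<in>{1..m}. real i * real m powr (\<rho> - 1)) = real m powr (\<rho> - 1) * (real m * (real m + 1) / 2)"
  proof -
    have "(\<Sum>i\<in>{1..m}. real i) = real m * (real m + 1) / 2"
      using double_gauss_sum_from_Suc_0[of m, where 'a=real] by simp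
    then show ?thesis by (simp add: sum_distrib_right[symmetric] mult.commute)
  qed
  moreover have "real m powr (1 + \<rho>) / 2 \<le> real m powr (\<rho> - 1) * (real m * (real m + 1) / 2)"
  proof -
    have "real m powr (1 + \<rho>) = real m powr (\<rho> - 1) * (real m * real m)"
    proof -
      have e1: "real m * real m powr (\<rho> - 1) = real m powr \<rho>" using powr_mult_base[of "real m" "\<rho> - 1"] by simp
      have e2: "real m * real m powr \<rho> = real m powr (1 + \<rho>)" using powr_mult_base[of "real m" \<rho>] by simp
      show ?thesis using e1 e2 by (metis mult.commute mult.left_commute)
    qed
    moreover have "real m * real m \<le> real m * (real m + 1)" using m0 by simp
    ultimately show ?thesis using m0 by (simp add: divide_right_mono mult_left_mono)
  qed
  ultimately show ?thesis by linarith
qed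

context lm begin

lemma S_lower:
  assumes K: "1 \<le> K"
  shows "l * real (K - 1) powr (1 + \<rho>) / 2 \<le> real (S K)"
proof -
  have "real (S K) = (\<Sum>i\<in>{1..<K}. real (len i))" unfolding epoch_start_def by simp
  also have "{1..<K} = {1..K - 1}" using K by auto
  finally have SK: "real (S K) = (\<Sum>i\<in>{1..K - 1}. real (len i))" .
  have "l * real (K - 1) powr (1 + \<rho>) / 2 \<le> l * (\<Sum>i\<in>{1..K - 1}. real i powr \<rho>)"
    using sumpow[OF rho0 rho1, of "K - 1"] lpos by (simp add: mult_left_mono)
  also have "\<dots> = (\<Sum>i\<in>{1..K - 1}. real i powr \<rho> * l)" by (simp add: sum_distrib_left mult.commute)
  also have "\<dots> \<le> (\<Sum>i\<in>{1..K - 1}. real (len i))" by (intro sum_mono lenge)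
  finally show ?thesis using SK by simp
qed


lemma regret_nonneg: "0 \<le> lmdsee_regret M X \<mu> N sel \<gamma> \<rho> l T"
  unfolding regret_eq by (intro sum_nonneg Ef_nonneg)

lemma bound_T:
  fixes c0 c1 c2 c3 D \<alpha> \<beta> :: real
  defines "\<alpha> \<equiv> (1 + \<nu>) / 2" and "\<beta> \<equiv> (1 - \<nu>) / 2"
    and "c0 \<equiv> (2 / l) powr \<alpha>" and "c1 \<equiv> 1 + c0"
    and "c2 \<equiv> c1 powr \<rho> * l + 1" and "c3 \<equiv> \<gamma> * (1 + \<bar>ln l\<bar>) + 1"
    and "D \<equiv> c1 * real N * (c3 + 4) + C * (1 + c2) powr \<nu> * c2"
  assumes T: "3 \<le> T"
  shows "lmdsee_regret M X \<mu> N sel \<gamma> \<rho> l T \<le> D * (real T powr \<alpha> * ln (real T))"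
proof -
  have a0: "0 < \<alpha>" "\<alpha> \<le> 1" using nu0 nu1 by (auto simp: \<alpha>_def)
  have b0: "0 \<le> \<beta>" "\<beta> \<le> 1" using nu0 nu1 by (auto simp: \<beta>_def)
  have arho: "\<alpha> * (1 + \<rho>) = 1" "\<alpha> * \<rho> = \<beta>" "\<nu> + \<beta> = \<alpha>"
    using nu0 unfolding \<alpha>_def \<beta>_def rho_def by (auto simp: field_simps)
  have c0: "0 \<le> c0" unfolding c0_def by simp
  have c1: "1 \<le> c1" using c0 by (simp add: c1_def)
  have c2: "1 \<le> c2" using lpos by (simp add: c2_def)
  have c3: "1 \<le> c3" using gam0 by (simp add: c3_def)
  define K where "K = epoch_of \<rho> l T"
  have T1: "1 \<le> T" using T by simp
  have Tr: "3 \<le> real T" using T by simp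
  have lnT: "1 \<le> ln (real T)"
    using Tr exp_le by (subst ln_ge_iff) auto
  have Ta: "1 \<le> real T powr \<alpha>" using Tr a0 by (intro ge_one_powr_ge_zero) auto
  have Tb: "1 \<le> real T powr \<beta>" using Tr b0 by (intro ge_one_powr_ge_zero) auto
  have Tb2: "real T powr \<beta> \<le> real T"
    using powr_mono[of \<beta> 1 "real T"] b0 Tr by simp
  have ep: "1 \<le> K" "S K < T" "T \<le> S (Suc K)" using epprops[OF T1] by (auto simp: K_def)
  have KT: "K \<le> T" using startge[OF ep(1)] ep(2) by linarith
  have mb: "real (K - 1) \<le> c0 * real T powr \<alpha>"
  proof -
    have "l * real (K - 1) powr (1 + \<rho>) / 2 < real T" using S_lower[OF ep(1)] ep(2) by linarith
    then have "real (K - 1) powr (1 + \<rho>) \<le> 2 / l * real T" using lpos by (simp add: field_simps)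
    then have "(real (K - 1) powr (1 + \<rho>)) powr \<alpha> \<le> (2 / l * real T) powr \<alpha>"
      using a0 by (intro powr_mono2) auto
    also have "(real (K - 1) powr (1 + \<rho>)) powr \<alpha> = real (K - 1)"
      by (simp add: powr_powr arho(1) mult.commute)
    also have "(2 / l * real T) powr \<alpha> = c0 * real T powr \<alpha>" unfolding c0_def by (rule powr_mult)
    finally show ?thesis .
  qed
  have Kb: "real K \<le> c1 * real T powr \<alpha>"
  proof -
    have "real K = real (K - 1) + 1" using ep(1) by simp
    also have "\<dots> \<le> c0 * real T powr \<alpha> + real T powr \<alpha>" using mb Ta by linarith
    finally show ?thesis by (simp add: c1_def algebra_simps)
  qed
  have Lb: "real (L k) \<le> c3 * ln (real T)" if k: "k \<in> {1..K}" for k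
  proof -
    define x where "x = real k powr \<rho> * l"
    have k0: "0 < real k" using k by simp
    have x0: "0 < x" using k0 lpos by (simp add: x_def)
    have lnx: "ln x = \<rho> * ln (real k) + ln l" using k0 lpos by (simp add: x_def ln_mult)
    have lnk: "0 \<le> ln (real k)" "ln (real k) \<le> ln (real T)" using k KT by auto
    have "\<rho> * ln (real k) \<le> ln (real k)" using lnk rho1 mult_right_mono[OF rho1 lnk(1)] by simp
    then have lnx2: "ln x \<le> ln (real T) + \<bar>ln l\<bar>" using lnx lnk by linarith
    have "real (L k) \<le> max 0 (\<gamma> * ln x) + 1" unfolding expl_len_def x_def[symmetric] by linarith
    also have "\<dots> \<le> \<gamma> * (ln (real T) + \<bar>ln l\<bar>) + 1"
    proof -
      have "\<gamma> * ln x \<le> \<gamma> * (ln (real T) + \<bar>ln l\<bar>)" using gam0 lnx2 by (intro mult_left_mono) auto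
      moreover have "0 \<le> \<gamma> * (ln (real T) + \<bar>ln l\<bar>)" using gam0 lnT by simp
      ultimately show ?thesis by simp
    qed
    also have "\<dots> \<le> \<gamma> * (ln (real T) + \<bar>ln l\<bar> * ln (real T)) + ln (real T)"
    proof -
      have "\<bar>ln l\<bar> \<le> \<bar>ln l\<bar> * ln (real T)" using lnT by (simp add: mult_le_cancel_left1)
      then have "\<gamma> * (ln (real T) + \<bar>ln l\<bar>) \<le> \<gamma> * (ln (real T) + \<bar>ln l\<bar> * ln (real T))"
        using gam0 by (intro mult_left_mono) auto
      then show ?thesis using lnT by linarith
    qed
    also have "\<dots> = c3 * ln (real T)" by (simp add: c3_def algebra_simps)
    finally show ?thesis .
  qed
  have first: "(\<Sum>k\<in>{1..K}. real (N * L k) + 4 * N) \<le> c1 * real N * (c3 + 4) * (real T powr \<alpha> * ln (real T))"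
  proof -
    have "(\<Sum>k\<in>{1..K}. real (N * L k) + 4 * N) \<le> (\<Sum>k\<in>{1..K}. real N * (c3 + 4) * ln (real T))"
    proof (rule sum_mono)
      fix k assume k: "k \<in> {1..K}"
      have "real (N * L k) \<le> real N * (c3 * ln (real T))" using Lb[OF k] by (simp add: mult_left_mono)
      moreover have "real (4 * N) \<le> real N * (4 * ln (real T))"
        using mult_left_mono[OF lnT, of "4 * real N"] by (simp add: algebra_simps)
      ultimately show "real (N * L k) + real (4 * N) \<le> real N * (c3 + 4) * ln (real T)"
        by (simp add: algebra_simps)
    qed
    also have "\<dots> = real K * (real N * (c3 + 4) * ln (real T))" by simp
    also have "\<dots> \<le> (c1 * real T powr \<alpha>) * (real N * (c3 + 4) * ln (real T))"
      using Kb c3 lnT by (intro mult_right_mono) auto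
    finally show ?thesis by (simp add: algebra_simps)
  qed
  have lenK: "real (len K) \<le> c2 * real T powr \<beta>"
  proof -
    have "real K powr \<rho> \<le> (c1 * real T powr \<alpha>) powr \<rho>" using Kb rho0 by (intro powr_mono2) auto
    also have "\<dots> = c1 powr \<rho> * real T powr \<beta>" by (simp add: powr_mult powr_powr arho(2))
    finally have "real K powr \<rho> * l \<le> c1 powr \<rho> * real T powr \<beta> * l" using lpos by (simp add: mult_right_mono)
    then have "real (len K) \<le> c1 powr \<rho> * l * real T powr \<beta> + 1" using lenless[of K] by (simp add: algebra_simps)
    also have "\<dots> \<le> c1 powr \<rho> * l * real T powr \<beta> + real T powr \<beta>" using Tb by simp
    finally show ?thesis by (simp add: c2_def algebra_simps)
  qed
  have SK1: "real (S (Suc K)) \<le> (1 + c2) * real T"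
  proof -
    have "real (S (Suc K)) = real (S K) + real (len K)" using startSuc[OF ep(1)] by simp
    also have "\<dots> \<le> real T + c2 * real T" using ep(2) lenK Tb2 c2
      by (smt (verit) mult_left_mono of_nat_less_iff)
    finally show ?thesis by (simp add: algebra_simps)
  qed
  have bp: "real (breakpoints N \<mu> (S (Suc K))) \<le> C * (1 + c2) powr \<nu> * real T powr \<nu>"
  proof -
    have "real (breakpoints N \<mu> (S (Suc K))) \<le> C * real (S (Suc K)) powr \<nu>" by (rule breaks)
    also have "\<dots> \<le> C * ((1 + c2) * real T) powr \<nu>" using SK1 nu0 C0 by (intro mult_left_mono powr_mono2) auto
    also have "\<dots> = C * (1 + c2) powr \<nu> * real T powr \<nu>" by (simp add: powr_mult)
    finally show ?thesis .
  qed
  have second: "real (breakpoints N \<mu> (S (Suc K))) * real (len K) \<le> C * (1 + c2) powr \<nu> * c2 * (real T powr \<alpha> * ln (real T))"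
  proof -
    have "real (breakpoints N \<mu> (S (Suc K))) * real (len K) \<le> (C * (1 + c2) powr \<nu> * real T powr \<nu>) * (c2 * real T powr \<beta>)"
      using bp lenK C0 by (intro mult_mono) auto
    also have "\<dots> = C * (1 + c2) powr \<nu> * c2 * real T powr \<alpha>"
      using Tr by (simp add: powr_add[symmetric] arho(3)[symmetric] algebra_simps)
    also have "\<dots> \<le> C * (1 + c2) powr \<nu> * c2 * (real T powr \<alpha> * ln (real T))"
    proof -
      have "real T powr \<alpha> \<le> real T powr \<alpha> * ln (real T)" using lnT Ta by (simp add: mult_le_cancel_left1)
      then show ?thesis using C0 c2 by (intro mult_left_mono) auto
    qed
    finally show ?thesis .
  qed
  have "lmdsee_regret M X \<mu> N sel \<gamma> \<rho> l T \<le>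
           (\<Sum>k\<in>{1..K}. real (N * L k) + 4 * N) + real (breakpoints N \<mu> (S (Suc K))) * real (len K)"
    by (rule regret_le[OF T1 K_def])
  also have "\<dots> \<le> D * (real T powr \<alpha> * ln (real T))"
    using first second unfolding D_def by (simp add: algebra_simps)
  finally show ?thesis .
qed

lemma final: "(\<lambda>T. lmdsee_regret M X \<mu> N sel \<gamma> \<rho> l T) \<in> O(\<lambda>T. real T powr ((1 + \<nu>) / 2) * ln (real T))"
proof -
  have "\<exists>D. \<forall>T\<ge>3. lmdsee_regret M X \<mu> N sel \<gamma> \<rho> l T \<le> D * (real T powr ((1 + \<nu>) / 2) * ln (real T))"
    by (rule exI, intro allI impI, rule bound_T)
  then obtain D where D: "\<And>T. 3 \<le> T \<Longrightarrow> lmdsee_regret M X \<mu> N sel \<gamma> \<rho> l T \<le> D * (real T powr ((1 + \<nu>) / 2) * ln (real T))"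
    by blast
  show ?thesis
  proof (rule bigoI[where c=D])
    show "\<forall>\<^sub>F T in at_top. norm (lmdsee_regret M X \<mu> N sel \<gamma> \<rho> l T) \<le> D * norm (real T powr ((1 + \<nu>) / 2) * ln (real T))"
      unfolding eventually_at_top_linorder
    proof (intro exI allI impI)
      fix T :: nat assume T: "3 \<le> T"
      have "0 \<le> real T powr ((1 + \<nu>) / 2) * ln (real T)" using T by simp
      then show "norm (lmdsee_regret M X \<mu> N sel \<gamma> \<rho> l T) \<le> D * norm (real T powr ((1 + \<nu>) / 2) * ln (real T))"
        using D[OF T] regret_nonneg[of T] by simp
    qed
  qed
qed

end


theorem theorem1:
  fixes M :: "'a measure" and X :: "nat \<Rightarrow> nat \<Rightarrow> 'a \<Rightarrow> real"
    and \<mu> :: "nat \<Rightarrow> nat \<Rightarrow> real" and N :: nat and sel :: "(nat \<Rightarrow> real) \<Rightarrow> nat"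
    and C \<nu> \<Delta> \<gamma> l :: real
  assumes "prob_space M"
    and "N \<ge> 1"
    and indep: "prob_space.indep_vars M (\<lambda>_. borel) (\<lambda>(j, t). X j t) ({..<N} \<times> UNIV)"
    and support: "\<And>j t. j < N \<Longrightarrow> AE \<omega> in M. 0 \<le> X j t \<omega> \<and> X j t \<omega> \<le> 1"
    and mean: "\<And>j t. j < N \<Longrightarrow> integral\<^sup>L M (X j t) = \<mu> j t"
    and "C > 0" and "0 \<le> \<nu>" and "\<nu> < 1"
    and breaks: "\<And>T. real (breakpoints N \<mu> T) \<le> C * real T powr \<nu>"
    and "\<Delta> > 0"
    and gap: "\<And>t. \<exists>i<N. \<forall>j<N. j \<noteq> i \<longrightarrow> \<mu> j t + \<Delta> \<le> \<mu> i t"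
    and "\<gamma> \<ge> 2 / \<Delta>\<^sup>2"
    and "l > 0"
    and len_ok: "\<And>k::nat. k \<ge> 1 \<Longrightarrow>
       \<lceil>real k powr ((1 - \<nu>) / (1 + \<nu>)) * l\<rceil>
         - int N * \<lceil>\<gamma> * ln (real k powr ((1 - \<nu>) / (1 + \<nu>)) * l)\<rceil> \<ge> 0"
    and sel: "\<And>v. sel v < N \<and> (\<forall>j<N. v j \<le> v (sel v))"
  shows "(\<lambda>T. lmdsee_regret M X \<mu> N sel \<gamma> ((1 - \<nu>) / (1 + \<nu>)) l T)
           \<in> O(\<lambda>T. real T powr ((1 + \<nu>) / 2) * ln (real T))"
proof -
  interpret L: lm M X \<mu> N sel C \<nu> \<Delta> \<gamma> l "(1 - \<nu>) / (1 + \<nu>)"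
    by (rule lm.intro[OF assms(1)], unfold_locales) (use assms in simp_all)
  show ?thesis by (rule L.final)
qed

end
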